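(* Let $G$ be a digraph with $n$ vertices. If $G$ has a primitive spanning strict subgraph, then $G$ admits a boolean nilpotent function of class at most $n^2-2n+3$.
   Context: Digraphs may have loops but no multiple arcs; cycles are directed, and a loop is a cycle of length $1$. A digraph is primitive if it is strongly connected and the greatest common divisor of the lengths of its cycles is $1$. A spanning strict subgraph of $G$ is a subgraph with the same vertex set and a proper subset of the arcs. A boolean function on $[n]$ is a map $f:\{0,1\}^n\to\{0,1\}^n$; its (unsigned) interaction graph has an arc $(j,i)$ iff $f_i$ depends essentially on $x_j$, i.e. $f_i(a)\neq f_i(b)$ for some $a,b$ differing only in coordinate $j$. An unsigned digraph $G$ on $[n]$ admits $f$ if the interaction graph of $f$ equals $G$. $f$ is nilpotent if $f^k$ is constant for some $k\geq 0$ ($f^0=\mathrm{id}$); the least such $k$ is its class. *)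

theory Defs
  imports Main "HOL-Library.Cardinality"
begin

(* Digraphs on a finite vertex type 'v (vertex set = UNIV, n = CARD('v)),
   given by their arc set; loops allowed, no multiple arcs. *)

definition strongly_connected :: "('v \<times> 'v) set \<Rightarrow> bool" where
  "strongly_connected G \<longleftrightarrow> (\<forall>u v. (u, v) \<in> G\<^sup>*)"

(* lengths of (elementary) directed cycles; a loop is a cycle of length 1 *)
definition cycle_lengths :: "('v \<times> 'v) set \<Rightarrow> nat set" where
  "cycle_lengths G = {k. \<exists>vs. length vs = k \<and> k \<ge> 1 \<and> distinct vs \<and>
      (\<forall>i<k. (vs ! i, vs ! ((i + 1) mod k)) \<in> G)}"

definition primitive :: "('v \<times> 'v) set \<Rightarrow> bool" where
  "primitive G \<longleftrightarrow> strongly_connected G \<and> Gcd (cycle_lengths G) = 1"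

definition depends_on :: "(('v \<Rightarrow> bool) \<Rightarrow> ('v \<Rightarrow> bool)) \<Rightarrow> 'v \<Rightarrow> 'v \<Rightarrow> bool" where
  "depends_on f i j \<longleftrightarrow> (\<exists>x. f x i \<noteq> f (x(j := \<not> x j)) i)"

definition interaction_graph :: "(('v \<Rightarrow> bool) \<Rightarrow> ('v \<Rightarrow> bool)) \<Rightarrow> ('v \<times> 'v) set" where
  "interaction_graph f = {(j, i). depends_on f i j}"

definition admits :: "('v \<times> 'v) set \<Rightarrow> (('v \<Rightarrow> bool) \<Rightarrow> ('v \<Rightarrow> bool)) \<Rightarrow> bool" where
  "admits G f \<longleftrightarrow> interaction_graph f = G"

definition nilpotent_at :: "(('v \<Rightarrow> bool) \<Rightarrow> ('v \<Rightarrow> bool)) \<Rightarrow> nat \<Rightarrow> bool" where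
  "nilpotent_at f k \<longleftrightarrow> (\<exists>c. \<forall>x. (f ^^ k) x = c)"

definition nilpotent :: "(('v \<Rightarrow> bool) \<Rightarrow> ('v \<Rightarrow> bool)) \<Rightarrow> bool" where
  "nilpotent f \<longleftrightarrow> (\<exists>k. nilpotent_at f k)"

definition nil_class :: "(('v \<Rightarrow> bool) \<Rightarrow> ('v \<Rightarrow> bool)) \<Rightarrow> nat" where
  "nil_class f = (LEAST k. nilpotent_at f k)"

end

theory Submission
  imports Defs
begin

lemma chain_full:
  fixes F :: "'v::finite set \<Rightarrow> 'v set"
  assumes mono: "\<And>X Y. X \<subseteq> Y \<Longrightarrow> F X \<subseteq> F Y"
    and base: "A \<subseteq> F A"
    and cover: "\<And>v. \<exists>k. v \<in> (F^^k) A"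
  shows "(F^^(CARD('v) - card A)) A = UNIV"
proof -
  have inc: "(F^^k) A \<subseteq> (F^^Suc k) A" for k
  proof (induction k)
    case 0 then show ?case using base by simp
  next
    case (Suc k) then show ?case using mono by simp
  qed
  have le: "k \<le> l \<Longrightarrow> (F^^k) A \<subseteq> (F^^l) A" for k l
  proof (induction l)
    case 0 then show ?case by simp
  next
    case (Suc l)
    show ?case
    proof (cases "k = Suc l")
      case True then show ?thesis by simp
    next
      case False then have "k \<le> l" using Suc.prems by simp
      then show ?thesis using Suc.IH inc[of l] by blast
    qed
  qed
  have stab0: "(F^^(k+i)) A = (F^^k) A" if st: "(F^^k) A = (F^^Suc k) A" for k i
  proof (induction i)
    case 0 show ?case by simp
  next
    case (Suc i)
    have "(F^^(k + Suc i)) A = F ((F^^(k+i)) A)" by simp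
    also have "\<dots> = F ((F^^k) A)" using Suc.IH by (rule arg_cong)
    also have "\<dots> = (F^^Suc k) A" by simp
    also have "\<dots> = (F^^k) A" using st by (rule sym)
    finally show ?case .
  qed
  have stab: "(F^^j) A = (F^^k) A" if st: "(F^^k) A = (F^^Suc k) A" and kj: "k \<le> j" for k j
  proof -
    obtain i where "j = k + i" using kj le_Suc_ex by blast
    then show ?thesis using stab0[OF st, of i] by simp
  qed
  have full: "(F^^k) A = (F^^Suc k) A \<Longrightarrow> (F^^k) A = UNIV" for k
  proof -
    assume st: "(F^^k) A = (F^^Suc k) A"
    { fix v obtain j where "v \<in> (F^^j) A" using cover by blast
      then have "v \<in> (F^^(max j k)) A" using le[of j "max j k"] by auto
      moreover have "(F^^(max j k)) A = (F^^k) A" using stab[OF st, of "max j k"] by linarith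
      ultimately have "v \<in> (F^^k) A" by blast }
    then show ?thesis by blast
  qed
  have claim: "(F^^k) A = UNIV \<or> card A + k \<le> card ((F^^k) A)" for k
  proof (induction k)
    case 0 then show ?case by simp
  next
    case (Suc k)
    show ?case
    proof (cases "(F^^k) A = UNIV")
      case True then show ?thesis using inc[of k] by auto
    next
      case False
      then have "(F^^k) A \<noteq> (F^^Suc k) A" using full by blast
      then have "(F^^k) A \<subset> (F^^Suc k) A" using inc[of k] by blast
      then have "card ((F^^k) A) < card ((F^^Suc k) A)" by (simp add: psubset_card_mono)
      then show ?thesis using Suc False by simp
    qed
  qed
  have "card A \<le> CARD('v)" by (simp add: card_mono)
  then have c: "card A + (CARD('v) - card A) = CARD('v)" by simp
  let ?P = "(F^^(CARD('v) - card A)) A"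
  have "card ?P \<le> CARD('v)" by (simp add: card_mono)
  show ?thesis
  proof (cases "?P = UNIV")
    case True then show ?thesis .
  next
    case False
    then have "card A + (CARD('v) - card A) \<le> card ?P" using claim[of "CARD('v) - card A"] by blast
    then have "card ?P = card (UNIV::'v set)" using c \<open>card ?P \<le> CARD('v)\<close> by linarith
    then show ?thesis using card_subset_eq[of "UNIV::'v set" ?P] by auto
  qed
qed

lemma pred_pow: fixes H :: "('a \<times> 'a) set" and A :: "'a set" and k :: nat shows
  "((\<lambda>X. {u. \<exists>y\<in>X. (u,y)\<in>H})^^k) A = {u. \<exists>y\<in>A. (u,y) \<in> H^^k}"
proof (induction k)
  case 0 then show ?case by (auto simp: funpow.simps(1) relpow.simps(1))
next
  case (Suc k)
  show ?case
  proof (rule set_eqI, rule iffI)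
    fix u assume "u \<in> ((\<lambda>X. {u. \<exists>y\<in>X. (u,y)\<in>H})^^Suc k) A"
    then obtain z y where zy: "(u,z)\<in>H" "y\<in>A" "(z,y)\<in>H^^k" using Suc by auto
    then have "(u,y) \<in> H^^Suc k" by (intro relpow_Suc_I2)
    then show "u \<in> {u. \<exists>y\<in>A. (u,y) \<in> H^^Suc k}" using zy(2) by blast
  next
    fix u assume "u \<in> {u. \<exists>y\<in>A. (u,y) \<in> H^^Suc k}"
    then obtain y where y: "y \<in> A" "(u,y) \<in> H^^Suc k" by blast
    then obtain z where "(u,z) \<in> H" "(z,y) \<in> H^^k" by (blast dest: relpow_Suc_D2)
    then show "u \<in> ((\<lambda>X. {u. \<exists>y\<in>X. (u,y)\<in>H})^^Suc k) A" using Suc y(1) by auto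
  qed
qed

lemma succ_pow: fixes H :: "('a \<times> 'a) set" and A :: "'a set" and k s :: nat shows
  "((\<lambda>X. {v. \<exists>y\<in>X. (y,v)\<in>H^^s})^^k) A = {v. \<exists>y\<in>A. (y,v) \<in> H^^(k*s)}"
proof (induction k)
  case 0 then show ?case by (auto simp: funpow.simps(1) relpow.simps(1))
next
  case (Suc k)
  have e: "H^^(Suc k * s) = H^^(k*s) O H^^s" by (metis relpow_add add.commute mult_Suc)
  show ?case using Suc unfolding e by auto
qed

lemma cyc_walk:
  assumes "\<forall>i<s. (vs!i, vs!((i+1) mod s)) \<in> H" "i < s"
  shows "(vs!i, vs!((i+j) mod s)) \<in> H^^j"
proof (induction j)
  case 0 then show ?case using assms(2) by simp
next
  case (Suc j)
  have "s > 0" using assms(2) by simp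
  then have "(vs!((i+j) mod s), vs!(((i+j) mod s + 1) mod s)) \<in> H" using assms(1) by simp
  moreover have "((i+j) mod s + 1) mod s = (i + Suc j) mod s" by (simp add: mod_Suc_eq)
  ultimately show ?case using Suc relpow_Suc_I by fastforce
qed

lemma semigroup_large:
  fixes T :: "nat set"
  assumes closed: "\<And>x y. x \<in> T \<Longrightarrow> y \<in> T \<Longrightarrow> x + y \<in> T" and z: "0 \<in> T"
    and x0: "x0 \<in> T" "x0 + d \<in> T" "d > 0"
    and dv: "\<And>d. (\<forall>t\<in>T. d dvd t) \<Longrightarrow> d = 1"
  shows "\<exists>N. \<forall>m\<ge>N. m \<in> T"
proof -
  have mul: "x \<in> T \<Longrightarrow> k * x \<in> T" for x k
    by (induction k) (auto simp: z closed)
  define D where "D = {d. d > 0 \<and> (\<exists>x\<in>T. x + d \<in> T)}"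
  have "d \<in> D" using x0 D_def by auto
  define d0 where "d0 = (LEAST d. d \<in> D)"
  have d0D: "d0 \<in> D" unfolding d0_def by (rule LeastI, fact)
  then obtain x where x: "x \<in> T" "x + d0 \<in> T" "d0 > 0" unfolding D_def by blast
  have "\<forall>t\<in>T. d0 dvd t"
  proof
    fix t assume t: "t \<in> T"
    define q r where "q = t div d0" and "r = t mod d0"
    have tq: "t = q * d0 + r" unfolding q_def r_def by simp
    have A: "t + q * x \<in> T" using closed[OF t mul[OF x(1)]] .
    have B: "q * (x + d0) \<in> T" using mul[OF x(2)] .
    have "q * (x + d0) + r = t + q * x" using tq by (simp add: algebra_simps)
    show "d0 dvd t"
    proof (rule ccontr)
      assume "\<not> d0 dvd t"
      then have "r > 0" unfolding r_def by (simp add: dvd_eq_mod_eq_0)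
      have "q * (x + d0) + r \<in> T" using A \<open>q * (x + d0) + r = t + q * x\<close> by simp
      then have "r \<in> D" unfolding D_def using B \<open>r > 0\<close> by blast
      then have "d0 \<le> r" unfolding d0_def by (rule Least_le)
      moreover have "r < d0" unfolding r_def using x(3) by simp
      ultimately show False by simp
    qed
  qed
  then have "d0 = 1" using dv by blast
  then have x1: "x + 1 \<in> T" using x by simp
  show ?thesis
  proof (intro exI allI impI)
    fix m assume m: "x * x \<le> m"
    show "m \<in> T"
    proof (cases "x = 0")
      case True then show ?thesis using mul[OF x1, of m] by simp
    next
      case False
      define q r where "q = m div x" and "r = m mod x"
      have "x * x div x \<le> m div x" using m by (rule div_le_mono)
      then have "x \<le> q" using False unfolding q_def by simp
      moreover have "r < x" using False unfolding r_def by simp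
      ultimately have rq: "r \<le> q" by simp
      have m1: "m = q * x + r" unfolding q_def r_def by simp
      have "(q - r) * x + r * (x + 1) = ((q - r) + r) * x + r" by (simp add: algebra_simps)
      also have "\<dots> = q * x + r" using rq by simp
      finally have m2: "m = (q - r) * x + r * (x + 1)" using m1 by simp
      have "(q - r) * x \<in> T" using mul x(1) by blast
      moreover have "r * (x + 1) \<in> T" using mul x1 by blast
      ultimately show ?thesis using closed m2 by metis
    qed
  qed
qed

theorem proposition7:
  fixes G :: "('v::finite \<times> 'v) set"
  assumes "\<exists>H. H \<subset> G \<and> primitive H"
  shows "\<exists>f :: ('v \<Rightarrow> bool) \<Rightarrow> ('v \<Rightarrow> bool).
           admits G f \<and> nilpotent f \<and>
           nil_class f \<le> (CARD('v))\<^sup>2 + 3 - 2 * CARD('v)"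
proof -
  obtain H where HG: "H \<subset> G" and prim: "primitive H" using assms by blast
  define n where "n = CARD('v)"
  have sc: "(u,v) \<in> H\<^sup>*" for u v using prim unfolding primitive_def strongly_connected_def by auto
  have g1: "Gcd (cycle_lengths H) = 1" using prim unfolding primitive_def by auto
  have CLne: "cycle_lengths H \<noteq> {}" using g1 by auto
  have CLle: "c \<le> n" if cc: "c \<in> cycle_lengths H" for c
  proof -
    obtain vs :: "'v list" where "length vs = c" "distinct vs" using cc unfolding cycle_lengths_def mem_Collect_eq by blast
    then have "card (set vs) = c" by (simp add: distinct_card)
    then show "c \<le> n" unfolding n_def using card_mono[of UNIV "set vs"] by simp
  qed
  obtain s where sC: "s \<in> cycle_lengths H" and sn: "s < n \<or> n = 1"
  proof (cases "\<exists>c\<in>cycle_lengths H. c < n")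
    case True then show ?thesis using that by blast
  next
    case False
    then have "cycle_lengths H \<subseteq> {n}" using CLle by force
    then have "cycle_lengths H = {n}" using CLne by blast
    then have "n = 1" using g1 by simp
    then show ?thesis using that CLne by blast
  qed
  obtain vs where vs: "length vs = s" "s \<ge> 1" "distinct vs"
      "\<forall>i<s. (vs!i, vs!((i+1) mod s)) \<in> H"
    using sC unfolding cycle_lengths_def mem_Collect_eq by blast
  define V where "V = set vs"
  have cardV: "card V = s" using vs V_def distinct_card by auto
  have walkC: "\<exists>y'\<in>V. (y,y') \<in> H^^j" if yV: "y \<in> V" for y j
  proof -
    obtain i where i: "i < s" "y = vs!i" using yV vs(1) unfolding V_def by (auto simp: in_set_conv_nth)
    have "(vs!i, vs!((i+j) mod s)) \<in> H^^j" using cyc_walk[OF vs(4) i(1)] .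
    moreover have "vs!((i+j) mod s) \<in> V" unfolding V_def using vs(1,2) by simp
    ultimately show ?thesis using i by blast
  qed
  have loopC: "(w,w) \<in> H^^s" if wV: "w \<in> V" for w
  proof -
    obtain i where i: "i < s" "w = vs!i" using wV vs(1) unfolding V_def by (auto simp: in_set_conv_nth)
    have "(vs!i, vs!((i+s) mod s)) \<in> H^^s" using cyc_walk[OF vs(4) i(1)] .
    then show ?thesis using i by simp
  qed
  have v0: "vs!0 \<in> V" unfolding V_def using vs(1,2) by simp
  have Qfull: "\<exists>y\<in>V. (u,y) \<in> H^^(n - s)" for u
  proof -
    let ?F = "\<lambda>X. {u. \<exists>y\<in>X. (u,y)\<in>H}"
    have "(?F^^(CARD('v) - card V)) V = UNIV"
    proof (rule chain_full)
      show "?F X \<subseteq> ?F Y" if "X \<subseteq> Y" for X Y using that by blast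
      show "V \<subseteq> ?F V"
      proof
        fix y assume "y \<in> V"
        then obtain y' where "y'\<in>V" "(y,y') \<in> H^^1" using walkC by blast
        then show "y \<in> ?F V" by auto
      qed
      show "\<exists>k. v \<in> (?F^^k) V" for v
      proof -
        obtain k where "(v, vs!0) \<in> H^^k" using sc rtrancl_power by blast
        then show ?thesis unfolding pred_pow using v0 by blast
      qed
    qed
    then show ?thesis unfolding pred_pow cardV n_def by blast
  qed
  have Rfull: "(w,v) \<in> H^^((n-1)*s)" if wV: "w \<in> V" for w v
  proof -
    define T where "T = {m. (w,w) \<in> H^^m}"
    have Tc: "x + y \<in> T" if "x \<in> T" "y \<in> T" for x y
      using that unfolding T_def by (auto simp: relpow_add)
    have T0: "0 \<in> T" unfolding T_def by simp
    have Ts: "0 + s \<in> T" using loopC wV T_def by simp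
    have Tdv: "d = 1" if dT: "\<forall>t\<in>T. d dvd t" for d
    proof -
      have "d dvd c" if cc: "c \<in> cycle_lengths H" for c
      proof -
        obtain ws where ws: "length ws = c" "c \<ge> 1" "\<forall>i<c. (ws!i, ws!((i+1) mod c)) \<in> H"
          using cc unfolding cycle_lengths_def mem_Collect_eq by blast
        have cl: "(ws!0, ws!0) \<in> H^^c" using cyc_walk[OF ws(3), of 0 c] ws(2) by simp
        obtain p where p: "(w, ws!0) \<in> H^^p" using sc rtrancl_power by blast
        obtain q where q: "(ws!0, w) \<in> H^^q" using sc rtrancl_power by blast
        have "p + q \<in> T" unfolding T_def using p q by (auto simp: relpow_add)
        moreover have "(p + c) + q \<in> T" unfolding T_def using p q cl by (auto simp: relpow_add)
        ultimately have "d dvd p + q" "d dvd (p + q) + c" using dT by (auto simp: add_ac)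
        then show "d dvd c" using dvd_add_right_iff by blast
      qed
      then have "d dvd Gcd (cycle_lengths H)" by (simp add: Gcd_greatest)
      then show "d = 1" using g1 by simp
    qed
    obtain N where N: "\<forall>m\<ge>N. m \<in> T"
      using semigroup_large[of T 0 s, OF Tc T0 T0 Ts _ Tdv] vs(2) by auto
    let ?G = "\<lambda>X. {v. \<exists>y\<in>X. (y,v) \<in> H^^s}"
    have "(?G^^(CARD('v) - card {w})) {w} = UNIV"
    proof (rule chain_full)
      show "?G X \<subseteq> ?G Y" if "X \<subseteq> Y" for X Y using that by blast
      show "{w} \<subseteq> ?G {w}" using loopC wV by blast
      show "\<exists>k. v \<in> (?G^^k) {w}" for v
      proof -
        obtain q where q: "(w, v) \<in> H^^q" using sc rtrancl_power by blast
        define k where "k = N + q"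
        have ks: "N + q \<le> k * s" unfolding k_def using vs(2)
          by (metis mult.right_neutral mult_le_mono2)
        then have "k * s - q \<in> T" using N by simp
        then have "(w,w) \<in> H^^(k*s - q)" unfolding T_def by simp
        then have "(w,v) \<in> H^^((k*s - q) + q)" using q by (auto simp: relpow_add)
        moreover have "(k*s - q) + q = k * s" using ks by simp
        ultimately show ?thesis unfolding succ_pow by auto
      qed
    qed
    then show ?thesis unfolding succ_pow n_def by auto
  qed
  define E where "E = (n - s) + (n-1)*s"
  have walks: "(u,v) \<in> H^^m" if "E \<le> m" for m u v
  proof -
    obtain y where y: "y\<in>V" "(u,y)\<in>H^^(n-s)" using Qfull by blast
    obtain y' where y': "y'\<in>V" "(y,y')\<in>H^^(m - E)" using walkC y(1) by blast
    have "(y',v) \<in> H^^((n-1)*s)" using Rfull y'(1) .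
    then have "(u,v) \<in> H^^((n-s) + (m-E) + (n-1)*s)" using y y' by (auto simp: relpow_add)
    moreover have "(n-s) + (m-E) + (n-1)*s = m" using that E_def by simp
    ultimately show ?thesis by simp
  qed
  have Ebound: "E + 1 \<le> n^2 + 3 - 2*n"
  proof (cases "s < n")
    case True
    then obtain k where k: "n = k + 2" using vs(2) by (metis add.commute le_Suc_ex Suc_leI one_add_one plus_1_eq_Suc less_le_trans le_less)
    have sk: "s \<le> k + 1" using True k by simp
    have "E = (k + 2 - s) + s + k * s" unfolding E_def k by (simp add: algebra_simps)
    also have "\<dots> = k + 2 + k * s" using sk by simp
    finally have Ee: "E = k + 2 + k * s" .
    have "k * s \<le> k * (k + 1)" using sk by (rule mult_le_mono2)
    moreover have "n^2 + 3 - 2*n = k*k + 2*k + 3" unfolding k by (simp add: power2_eq_square algebra_simps)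
    ultimately show ?thesis using Ee by (simp add: algebra_simps)
  next
    case False
    then have "n = 1" using sn by simp
    moreover have "s = 1" using CLle[OF sC] vs(2) \<open>n = 1\<close> by simp
    ultimately show ?thesis unfolding E_def by simp
  qed
  obtain a b :: "'v" where ab: "(a,b) \<in> G" "(a,b) \<notin> H" using HG by auto
  define f :: "('v \<Rightarrow> bool) \<Rightarrow> ('v \<Rightarrow> bool)" where
    "f x i = (\<forall>j. (j,i) \<in> G \<longrightarrow> (if j = a \<and> i = b then \<not> x j else x j))" for x i
  have adm: "admits G f"
    unfolding admits_def interaction_graph_def depends_on_def
  proof (intro set_eqI iffI)
    fix p assume "p \<in> {(j, i). \<exists>x. f x i \<noteq> f (x(j := \<not> x j)) i}"
    then obtain j i x where p: "p = (j,i)" and ne: "f x i \<noteq> f (x(j := \<not> x j)) i" by blast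
    show "p \<in> G"
    proof (rule ccontr)
      assume "p \<notin> G"
      then have "(k,i) \<in> G \<Longrightarrow> (x(j := \<not> x j)) k = x k" for k using p by auto
      then have "f x i = f (x(j := \<not> x j)) i" unfolding f_def by simp
      then show False using ne by simp
    qed
  next
    fix p assume pG: "p \<in> G"
    obtain j i where p: "p = (j,i)" by (cases p)
    define x where "x = (\<lambda>k. \<not> (k = a \<and> i = b))"
    have "f x i" unfolding f_def x_def by auto
    moreover have "\<not> f (x(j := \<not> x j)) i" unfolding f_def x_def using pG p by auto
    ultimately show "p \<in> {(j, i). \<exists>x. f x i \<noteq> f (x(j := \<not> x j)) i}" using p by auto
  qed
  have step: "(f^^t) x j" if "(f^^Suc t) x i" "(j,i) \<in> H" for t x i j
  proof -
    have "f ((f^^t) x) i" using that(1) by simp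
    moreover have "(j,i) \<in> G" using that(2) HG by blast
    moreover have "\<not> (j = a \<and> i = b)" using that(2) ab(2) by blast
    ultimately show ?thesis unfolding f_def by auto
  qed
  have stepb: "\<not> (f^^t) x a" if "(f^^Suc t) x b" for t x
  proof -
    have "f ((f^^t) x) b" using that by simp
    then show ?thesis using ab(1) unfolding f_def by auto
  qed
  have bwd: "\<And>i. (f^^(t+k)) x i \<Longrightarrow> (j,i) \<in> H^^k \<Longrightarrow> (f^^t) x j" for k t x j
  proof (induction k)
    case 0 then show ?case by simp
  next
    case (Suc k)
    from Suc.prems(2) obtain y where y: "(j,y) \<in> H^^k" "(y,i) \<in> H" by (rule relpow_Suc_E)
    have "(f^^Suc (t+k)) x i" using Suc.prems(1) by simp
    then have "(f^^(t+k)) x y" using step y(2) by blast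
    then show ?case using Suc.IH y(1) by blast
  qed
  have nil: "(f^^(E+1)) x = (\<lambda>_. False)" for x
  proof
    fix i
    show "(f^^(E+1)) x i = False"
    proof (rule ccontr)
      assume "(f^^(E+1)) x i \<noteq> False"
      then have fi: "(f^^(E+1)) x i" by simp
      have "(b,i) \<in> H^^E" using walks by simp
      then have "(f^^1) x b" using bwd[of 1 E x i b] fi by (simp add: add.commute)
      then have "\<not> x a" using stepb[of 0 x] by simp
      moreover have "(a,i) \<in> H^^(E+1)" by (rule walks) simp
      then have "(f^^0) x a" using bwd[of 0 "E+1" x i a] fi by simp
      ultimately show False by simp
    qed
  qed
  have na: "nilpotent_at f (E+1)" unfolding nilpotent_at_def using nil by blast
  have "nil_class f \<le> E + 1" unfolding nil_class_def using na by (rule Least_le)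
  then have "nil_class f \<le> (CARD('v))\<^sup>2 + 3 - 2 * CARD('v)" using Ebound n_def by simp
  moreover have "nilpotent f" unfolding nilpotent_def using na by blast
  ultimately show ?thesis using adm by blast
qed

end
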